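(* For a plane binary tree $t$ with $k$ nodes let $\tilde\rho=1+\epsilon$ be the dominant singularity of $S_t(z)$. Then \[ (1+\epsilon)^{-n} \sim e^{-n\epsilon} \] as $n\to\infty$, for $k\ge \log_4 n$.
   Context: A plane binary tree is a rooted tree in which each node has a left and a right slot, each empty or holding a subtree. A plane increasing binary tree of size $n$ is such a tree whose $n$ nodes are labeled $1,\dots,n$ increasingly along every path from the root. A fringe subtree is a node with all its descendants; its shape is obtained by forgetting labels. For $t$ with $k$ nodes, $w(t)=\ell(t)/k!$ where $\ell(t)$ is the number of increasing labelings of $t$. $S_t$ is the exponential generating function of plane increasing binary trees with no fringe subtree of shape $t$, the power series solution of $S_t'=(1+S_t)^2-w(t)kz^{k-1}$, $S_t(0)=0$; one has $S_t=-u'/u$ with $u$ the entire solution of $u''-2u'+(1-w(t)kz^{k-1})u=0$, $u(0)=-1$, $u'(0)=0$, and $\tilde\rho>1$ is the smallest positive zero of $u$. *)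

theory Defs
  imports "HOL-Analysis.Analysis" "HOL-Library.Landau_Symbols"
begin

text \<open>Plane binary trees: each node has a left and right slot, each empty (Tip) or a subtree.\<close>
datatype ptree = Tip | Node ptree ptree

fun tsize :: "ptree \<Rightarrow> nat" where
  "tsize Tip = 0"
| "tsize (Node l r) = Suc (tsize l + tsize r)"

text \<open>Nodes of a tree, addressed by their path from the root (False = left, True = right).\<close>
fun nodes :: "ptree \<Rightarrow> bool list set" where
  "nodes Tip = {}"
| "nodes (Node l r) = insert [] ((\<lambda>p. False # p) ` nodes l \<union> (\<lambda>p. True # p) ` nodes r)"

definition incr_labelings :: "ptree \<Rightarrow> (bool list \<Rightarrow> nat) set" where
  "incr_labelings t = {f. bij_betw f (nodes t) {1..tsize t}
      \<and> (\<forall>p b. p \<in> nodes t \<longrightarrow> p @ [b] \<in> nodes t \<longrightarrow> f p < f (p @ [b]))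
      \<and> (\<forall>p. p \<notin> nodes t \<longrightarrow> f p = 0)}"

definition num_labelings :: "ptree \<Rightarrow> nat" where
  "num_labelings t = card (incr_labelings t)"

definition wt :: "ptree \<Rightarrow> real" where
  "wt t = real (num_labelings t) / fact (tsize t)"

definition is_u :: "ptree \<Rightarrow> (real \<Rightarrow> real) \<Rightarrow> bool" where
  "is_u t u \<longleftrightarrow> (\<exists>u'. (\<forall>x. (u has_real_derivative u' x) (at x)
       \<and> (u' has_real_derivative
            (2 * u' x - (1 - wt t * real (tsize t) * x ^ (tsize t - 1)) * u x)) (at x))
     \<and> u 0 = -1 \<and> u' 0 = 0)"

definition u_fun :: "ptree \<Rightarrow> real \<Rightarrow> real" where
  "u_fun t = (THE u. is_u t u)"

definition rho_tilde :: "ptree \<Rightarrow> real" where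
  "rho_tilde t = Inf {x. x > 0 \<and> u_fun t x = 0}"

definition eps :: "ptree \<Rightarrow> real" where
  "eps t = rho_tilde t - 1"

end

theory Submission
  imports Defs "HOL-Real_Asymp.Real_Asymp"
begin


definition LL :: "ptree \<Rightarrow> nat set \<Rightarrow> (bool list \<Rightarrow> nat) set" where
  "LL t A = {f. bij_betw f (nodes t) A
      \<and> (\<forall>p b. p \<in> nodes t \<longrightarrow> p @ [b] \<in> nodes t \<longrightarrow> f p < f (p @ [b]))
      \<and> (\<forall>p. p \<notin> nodes t \<longrightarrow> f p = 0)}"

lemma incr_LL: "incr_labelings t = LL t {1..tsize t}"
  unfolding incr_labelings_def LL_def by simp

lemma finite_nodes: "finite (nodes t)"
  by (induction t) auto

lemma card_nodes: "card (nodes t) = tsize t"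
proof (induction t)
  case Tip
  then show ?case by simp
next
  case (Node l r)
  have d: "(Cons False ` nodes l) \<inter> (Cons True ` nodes r) = {}" by auto
  have "card (Cons False ` nodes l \<union> Cons True ` nodes r) = card (nodes l) + card (nodes r)"
    using d finite_nodes by (simp add: card_Un_disjoint card_image)
  moreover have "[] \<notin> Cons False ` nodes l \<union> Cons True ` nodes r" by auto
  ultimately show ?case using Node finite_nodes by simp
qed

lemma nodes_prefix: "p @ [b] \<in> nodes t \<Longrightarrow> p \<in> nodes t"
proof (induction t arbitrary: p)
  case Tip
  then show ?case by simp
next
  case (Node l r)
  show ?case
  proof (cases p)
    case Nil
    then show ?thesis by simp
  next
    case (Cons a q)
    then show ?thesis using Node by (cases a) auto
  qed
qed

lemma LL_D:
  assumes "f \<in> LL t A"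
  shows "bij_betw f (nodes t) A" "\<And>p c. p \<in> nodes t \<Longrightarrow> p @ [c] \<in> nodes t \<Longrightarrow> f p < f (p @ [c])"
    "\<And>p. p \<notin> nodes t \<Longrightarrow> f p = 0"
  using assms unfolding LL_def by auto

lemma root_less:
  assumes f: "f \<in> LL t A" and p: "p \<in> nodes t" "p \<noteq> []"
  shows "f [] < f p"
  using p
proof (induction p rule: rev_induct)
  case Nil
  then show ?case by simp
next
  case (snoc b q)
  have q: "q \<in> nodes t" using snoc.prems nodes_prefix by blast
  have lt: "f q < f (q @ [b])" using f q snoc.prems unfolding LL_def by blast
  show ?case
  proof (cases "q = []")
    case True
    then show ?thesis using lt by simp
  next
    case False
    then show ?thesis using snoc.IH q lt by simp
  qed
qed

lemma root_Min:
  assumes f: "f \<in> LL t A" and t: "t \<noteq> Tip"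
  shows "f [] = Min A"
proof -
  have r: "[] \<in> nodes t" using t by (cases t) auto
  have bij: "bij_betw f (nodes t) A" using f unfolding LL_def by blast
  have fin: "finite A" using bij finite_nodes bij_betw_finite by blast
  have A: "A = f ` nodes t" using bij by (simp add: bij_betw_def)
  show ?thesis
  proof (rule Min_eqI[symmetric])
    show "finite A" by fact
    show "f [] \<in> A" using A r by blast
    fix y assume "y \<in> A"
    then obtain p where "p \<in> nodes t" "y = f p" using A by blast
    then show "f [] \<le> y" using root_less[OF f] by (cases "p = []") (auto intro: less_imp_le)
  qed
qed

lemma finite_LL:
  assumes "finite A" shows "finite (LL t A)"
proof -
  have inj: "inj_on (\<lambda>f. restrict f (nodes t)) (LL t A)"
  proof (rule inj_onI)
    fix f g assume f: "f \<in> LL t A" and g: "g \<in> LL t A"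
      and e: "restrict f (nodes t) = restrict g (nodes t)"
    show "f = g"
    proof
      fix p show "f p = g p"
      proof (cases "p \<in> nodes t")
        case True
        then show ?thesis using fun_cong[OF e, of p] by simp
      next
        case False
        then show ?thesis using f g unfolding LL_def by auto
      qed
    qed
  qed
  have "(\<lambda>f. restrict f (nodes t)) ` LL t A \<subseteq> PiE (nodes t) (\<lambda>_. A)"
    unfolding LL_def bij_betw_def by auto
  moreover have "finite (PiE (nodes t) (\<lambda>_. A))"
    using assms finite_nodes by (intro finite_PiE) auto
  ultimately show ?thesis using inj finite_imageD finite_subset by blast
qed

definition Bw :: "nat \<Rightarrow> real" where
  "Bw k = (if k = 0 then 1 else 5/4 * (real k + 1) * (5/12)^k)"

lemma Bw_nonneg: "0 \<le> Bw k" unfolding Bw_def by simp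

lemma real_ineq: "(x::real) \<ge> 1 \<Longrightarrow> y \<ge> 1 \<Longrightarrow> 3 * (x+1) * (y+1) \<le> (x+y+1) * (x+y+2)"
proof -
  assume x: "x \<ge> 1" and y: "y \<ge> 1"
  have h1: "0 \<le> (x-y)*(x-y)" by simp
  have h2: "1 \<le> x*y" using x y by (metis mult_mono' mult_1 zero_le_one)
  show ?thesis using h1 h2 by (simp add: algebra_simps)
qed

lemma Bw_rec: "Bw a * Bw b \<le> (real (a+b) + 1) * Bw (a+b+1)"
proof -
  define q :: real where "q = 5/12"
  have q0: "0 < q" by (simp add: q_def)
  have BwS: "Bw (a+b+1) = 5/4 * (real (a+b) + 2) * q^(a+b+1)" unfolding Bw_def q_def by simp
  consider "a = 0" "b = 0" | "a \<ge> 1" "b = 0" | "a = 0" "b \<ge> 1" | "a \<ge> 1" "b \<ge> 1" by linarith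
  then show ?thesis
  proof cases
    case 1
    then show ?thesis unfolding Bw_def by simp
  next
    case 2
    have "Bw a = 5/4 * (real a + 1) * q^a" using 2 unfolding Bw_def q_def by simp
    moreover have "1 \<le> (real a + 2) * q" using 2 by (simp add: q_def)
    moreover have "0 \<le> 5/4 * (real a + 1) * q^a" using q0 by simp
    ultimately have "Bw a \<le> 5/4 * (real a + 1) * q^a * ((real a + 2) * q)"
      using mult_left_mono[of 1 "(real a + 2) * q" "5/4 * (real a + 1) * q^a"] by simp
    also have "\<dots> = (real (a+b) + 1) * Bw (a+b+1)" using 2 BwS by (simp add: algebra_simps)
    finally show ?thesis using 2 by (simp add: Bw_def)
  next
    case 3
    have "Bw b = 5/4 * (real b + 1) * q^b" using 3 unfolding Bw_def q_def by simp
    moreover have "1 \<le> (real b + 2) * q" using 3 by (simp add: q_def)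
    moreover have "0 \<le> 5/4 * (real b + 1) * q^b" using q0 by simp
    ultimately have "Bw b \<le> 5/4 * (real b + 1) * q^b * ((real b + 2) * q)"
      using mult_left_mono[of 1 "(real b + 2) * q" "5/4 * (real b + 1) * q^b"] by simp
    also have "\<dots> = (real (a+b) + 1) * Bw (a+b+1)" using 3 BwS by (simp add: algebra_simps)
    finally show ?thesis using 3 by (simp add: Bw_def)
  next
    case 4
    have e: "Bw a * Bw b = (5/4 * q^(a+b)) * (5/4 * (real a + 1) * (real b + 1))"
      using 4 unfolding Bw_def q_def by (simp add: power_add algebra_simps)
    have e2: "(real (a+b) + 1) * Bw (a+b+1) = (5/4 * q^(a+b)) * ((real a + real b + 1) * (real a + real b + 2) * q)"
      unfolding BwS by (simp add: algebra_simps power_add)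
    have "3 * (real a+1) * (real b+1) \<le> (real a+real b+1) * (real a+real b+2)"
      using 4 by (intro real_ineq) auto
    then have "5/4 * (real a + 1) * (real b + 1) \<le> (real a + real b + 1) * (real a + real b + 2) * q"
      by (simp add: q_def algebra_simps)
    then show ?thesis unfolding e e2 using q0 by (intro mult_left_mono) auto
  qed
qed

lemma nodes_Node: "nodes (Node l r) = insert [] (Cons False ` nodes l \<union> Cons True ` nodes r)"
  by simp

lemma card_LL_bound:
  assumes "finite A"
  shows "real (card (LL t A)) \<le> fact (card A) * Bw (tsize t)"
  using assms
proof (induction t arbitrary: A)
  case Tip
  have "LL Tip A \<subseteq> {\<lambda>_. 0}" unfolding LL_def by auto
  then have "card (LL Tip A) \<le> card {\<lambda>_::bool list. 0::nat}" by (intro card_mono) auto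
  then have "real (card (LL Tip A)) \<le> 1" by simp
  moreover have "(1::real) \<le> fact (card A)" by simp
  moreover have "Bw (tsize Tip) = 1" by (simp add: Bw_def)
  ultimately show ?case by (metis mult.right_neutral order_trans)
next
  case (Node l r)
  note finA = Node.prems
  show ?case
  proof (cases "LL (Node l r) A = {}")
    case True
    then show ?thesis using Bw_nonneg by simp
  next
    case False
    then obtain f0 where f0: "f0 \<in> LL (Node l r) A" by blast
    define a where "a = tsize l"
    define b where "b = tsize r"
    have cardA: "card A = a + b + 1"
    proof -
      have "bij_betw f0 (nodes (Node l r)) A" using f0 unfolding LL_def by blast
      then have "card A = card (nodes (Node l r))" using bij_betw_same_card by metis
      then show ?thesis using card_nodes[of "Node l r"] by (simp add: a_def b_def)
    qed
    define m where "m = Min A"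
    define A' where "A' = A - {m}"
    have finA': "finite A'" using finA by (simp add: A'_def)
    have mA: "m \<in> A" using cardA finA unfolding m_def by (intro Min_in) auto
    have cardA': "card A' = a + b" using cardA mA finA by (simp add: A'_def)
    define Subs where "Subs = {S. S \<subseteq> A' \<and> card S = a}"
    define Tgt where "Tgt = (SIGMA S:Subs. LL l S \<times> LL r (A' - S))"
    define phi where "phi = (\<lambda>f::bool list \<Rightarrow> nat. (f ` (Cons False ` nodes l), (\<lambda>p. f (False # p)), (\<lambda>p. f (True # p))))"
    have finSubs: "finite Subs" unfolding Subs_def using finA' by auto
    have finTgt: "finite Tgt" unfolding Tgt_def using finSubs finA'
      by (intro finite_SigmaI finite_cartesian_product finite_LL) (auto simp: Subs_def dest: finite_subset)
    have inj: "inj_on phi (LL (Node l r) A)"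
    proof (rule inj_onI)
      fix f g assume f: "f \<in> LL (Node l r) A" and g: "g \<in> LL (Node l r) A" and e: "phi f = phi g"
      have e1': "(\<lambda>p. f (False # p)) = (\<lambda>p. g (False # p))" using e unfolding phi_def by (simp only: prod.inject)
      have e2': "(\<lambda>p. f (True # p)) = (\<lambda>p. g (True # p))" using e unfolding phi_def by (simp only: prod.inject)
      have e1: "\<And>p. f (False # p) = g (False # p)" using fun_cong[OF e1'] .
      have e2: "\<And>p. f (True # p) = g (True # p)" using fun_cong[OF e2'] .
      have e0: "f [] = g []" using root_Min[OF f] root_Min[OF g] by simp
      show "f = g"
      proof
        fix p show "f p = g p"
        proof (cases p)
          case Nil then show ?thesis using e0 by simp
        next
          case (Cons c q) then show ?thesis using e1 e2 by (cases c) auto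
        qed
      qed
    qed
    have into: "phi ` LL (Node l r) A \<subseteq> Tgt"
    proof
      fix x assume "x \<in> phi ` LL (Node l r) A"
      then obtain f where f: "f \<in> LL (Node l r) A" and x: "x = phi f" by blast
      note bij = LL_D(1)[OF f] and incr = LL_D(2)[OF f] and out = LL_D(3)[OF f]
      have injf: "inj_on f (nodes (Node l r))" and imf: "f ` nodes (Node l r) = A"
        using bij by (auto simp: bij_betw_def)
      have fm: "f [] = m" using root_Min[OF f] by (simp add: m_def)
      define S where "S = f ` (Cons False ` nodes l)"
      define Rr where "Rr = f ` (Cons True ` nodes r)"
      have "inj_on f (Cons False ` nodes l)" using injf by (rule inj_on_subset) auto
      then have injl: "inj_on (\<lambda>p. f (False # p)) (nodes l)"
        using comp_inj_on[of "Cons False" "nodes l" f] by (simp add: comp_def)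
      have "inj_on f (Cons True ` nodes r)" using injf by (rule inj_on_subset) auto
      then have injr: "inj_on (\<lambda>p. f (True # p)) (nodes r)"
        using comp_inj_on[of "Cons True" "nodes r" f] by (simp add: comp_def)
      have S_img: "(\<lambda>p. f (False # p)) ` nodes l = S" unfolding S_def by (simp add: image_image)
      have R_img: "(\<lambda>p. f (True # p)) ` nodes r = Rr" unfolding Rr_def by (simp add: image_image)
      have Rr_eq: "Rr = A' - S"
      proof -
        have "Cons True ` nodes r = nodes (Node l r) - ({[]} \<union> Cons False ` nodes l)" by auto
        then have "Rr = f ` (nodes (Node l r) - ({[]} \<union> Cons False ` nodes l))" unfolding Rr_def by (rule arg_cong)
        also have "\<dots> = f ` nodes (Node l r) - f ` ({[]} \<union> Cons False ` nodes l)"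
          by (rule inj_on_image_set_diff[OF injf]) (blast, simp only: nodes_Node, blast)
        also have "f ` ({[]} \<union> Cons False ` nodes l) = insert m S" using fm by (simp add: S_def)
        also have "f ` nodes (Node l r) - insert m S = A' - S" unfolding imf A'_def by blast
        finally show ?thesis .
      qed
      have SA': "S \<subseteq> A'"
      proof
        fix y assume "y \<in> S"
        then obtain p where p: "p \<in> nodes l" "y = f (False # p)" unfolding S_def by blast
        have "False # p \<in> nodes (Node l r)" using p(1) by simp
        then have "y \<in> f ` nodes (Node l r)" unfolding p(2) by (rule imageI)
        then have "y \<in> A" using imf by (simp only:)
        moreover have "y \<noteq> m"
        proof
          assume "y = m"
          then have "f (False # p) = f []" using p fm by simp
          moreover have "False # p \<in> nodes (Node l r)" "[] \<in> nodes (Node l r)" using p(1) by simp_all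
          ultimately have "False # p = []" using inj_onD[OF injf] by blast
          then show False by simp
        qed
        ultimately show "y \<in> A'" by (simp add: A'_def)
      qed
      have "card S = card (nodes l)" using card_image[OF injl] S_img by simp
      then have cardS: "card S = a" using card_nodes a_def by simp
      have Ll: "(\<lambda>p. f (False # p)) \<in> LL l S"
        unfolding LL_def
      proof (intro CollectI conjI allI impI)
        show "bij_betw (\<lambda>p. f (False # p)) (nodes l) S" using injl S_img by (simp add: bij_betw_def)
      next
        fix p c assume "p \<in> nodes l" "p @ [c] \<in> nodes l"
        then show "f (False # p) < f (False # p @ [c])" using incr[of "False # p" c] by simp
      next
        fix p assume "p \<notin> nodes l"
        then show "f (False # p) = 0" using out[of "False # p"] by auto
      qed
      have Lr: "(\<lambda>p. f (True # p)) \<in> LL r (A' - S)"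
        unfolding LL_def
      proof (intro CollectI conjI allI impI)
        show "bij_betw (\<lambda>p. f (True # p)) (nodes r) (A' - S)" using injr R_img Rr_eq by (simp add: bij_betw_def)
      next
        fix p c assume "p \<in> nodes r" "p @ [c] \<in> nodes r"
        then show "f (True # p) < f (True # p @ [c])" using incr[of "True # p" c] by simp
      next
        fix p assume "p \<notin> nodes r"
        then show "f (True # p) = 0" using out[of "True # p"] by auto
      qed
      have "S \<in> Subs" using SA' cardS by (simp add: Subs_def)
      then show "x \<in> Tgt" unfolding x Tgt_def phi_def S_def[symmetric]
        using Ll Lr by (intro SigmaI) simp_all
    qed
    have fins: "\<forall>S\<in>Subs. finite (LL l S \<times> LL r (A' - S))"
    proof
      fix S assume "S \<in> Subs"
      then have "finite S" using finA' unfolding Subs_def using finite_subset by blast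
      then show "finite (LL l S \<times> LL r (A' - S))"
        using finA' by (intro finite_cartesian_product finite_LL) auto
    qed
    have "card (LL (Node l r) A) \<le> card Tgt"
      using card_inj_on_le[OF inj into finTgt] .
    also have "card Tgt = (\<Sum>S\<in>Subs. card (LL l S) * card (LL r (A' - S)))"
      unfolding Tgt_def using card_SigmaI[OF finSubs fins] by (simp add: card_cartesian_product)
    finally have c0: "card (LL (Node l r) A) \<le> (\<Sum>S\<in>Subs. card (LL l S) * card (LL r (A' - S)))" .
    then have "real (card (LL (Node l r) A)) \<le> real (\<Sum>S\<in>Subs. card (LL l S) * card (LL r (A' - S)))"
      by (rule of_nat_mono)
    also have "\<dots> = (\<Sum>S\<in>Subs. real (card (LL l S)) * real (card (LL r (A' - S))))" by simp
    also have "\<dots> \<le> (\<Sum>S\<in>Subs. (fact a * Bw a) * (fact b * Bw b))"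
    proof (rule sum_mono)
      fix S assume S: "S \<in> Subs"
      have finS: "finite S" using S finA' unfolding Subs_def by (auto intro: finite_subset)
      have cS: "card S = a" using S unfolding Subs_def by simp
      have cR: "card (A' - S) = b" using S finA' cardA' unfolding Subs_def by (simp add: card_Diff_subset finS)
      have h1: "real (card (LL l S)) \<le> fact a * Bw a" using Node.IH(1)[OF finS] cS a_def by simp
      have h2: "real (card (LL r (A' - S))) \<le> fact b * Bw b" using Node.IH(2)[of "A' - S"] finA' cR b_def by simp
      show "real (card (LL l S)) * real (card (LL r (A' - S))) \<le> (fact a * Bw a) * (fact b * Bw b)"
        using h1 h2 by (intro mult_mono) (auto simp: Bw_nonneg)
    qed
    also have "\<dots> = real (card Subs) * (fact a * fact b) * (Bw a * Bw b)" by (simp add: algebra_simps)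
    also have "card Subs = (a + b) choose a" unfolding Subs_def using n_subsets[OF finA', of a] cardA' by simp
    also have "real ((a + b) choose a) * (fact a * fact b) = fact (a + b)"
      using binomial_fact[of a "a+b", where 'a=real] by (simp add: field_simps)
    also have "fact (a + b) * (Bw a * Bw b) \<le> fact (a + b) * ((real (a+b) + 1) * Bw (a+b+1))"
      by (intro mult_left_mono Bw_rec) auto
    also have "\<dots> = fact (card A) * Bw (tsize (Node l r))"
      using cardA by (simp add: a_def b_def algebra_simps)
    finally show ?thesis .
  qed
qed

lemma wt_bound: "wt t \<le> Bw (tsize t)"
proof -
  have "real (num_labelings t) \<le> fact (tsize t) * Bw (tsize t)"
    unfolding num_labelings_def incr_LL using card_LL_bound[of "{1..tsize t}" t] by simp
  then show ?thesis unfolding wt_def by (simp add: divide_le_eq mult.commute)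
qed

lemma wt_nonneg: "0 \<le> wt t" unfolding wt_def by simp



lemma pow_fact_le_exp:
  fixes x :: real assumes "0 \<le> x" shows "x ^ n / fact n \<le> exp x"
proof -
  have s: "(\<lambda>n. x ^ n /\<^sub>R fact n) sums exp x" by (rule exp_converges)
  have "(\<Sum>i\<in>{n}. x ^ i /\<^sub>R fact i) \<le> (\<Sum>i. x ^ i /\<^sub>R fact i)"
    using s assms by (intro sum_le_suminf) (auto simp: sums_iff)
  then show ?thesis using s by (simp add: sums_iff divide_inverse mult.commute)
qed

fun cf :: "nat \<Rightarrow> real \<Rightarrow> nat \<Rightarrow> real" where
  "cf k c 0 = -1"
| "cf k c (Suc 0) = 1"
| "cf k c (Suc (Suc j)) = (if k \<le> Suc j then c * cf k c (Suc j - k) / (real (Suc (Suc j)) * real (Suc j)) else 0)"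

lemma cf_bound:
  "1 \<le> k \<Longrightarrow> 0 \<le> c \<Longrightarrow> \<bar>cf k c j\<bar> \<le> c ^ (j div (k+1)) / fact (j div (k+1))"
proof (induction k c j rule: cf.induct)
  case (1 k c)
  then show ?case by simp
next
  case (2 k c)
  have "Suc 0 div Suc k = 0" using 2 by (simp add: div_less)
  then show ?case by simp
next
  case (3 k c j)
  note k = "3.prems"(1) and c = "3.prems"(2)
  show ?case
  proof (cases "k \<le> Suc j")
    case False
    then show ?thesis by simp
  next
    case True
    define m where "m = Suc (Suc j) div (k+1)"
    have e: "Suc j - k + (k+1) = Suc (Suc j)" using True by simp
    have m1: "(Suc j - k) div (k+1) + 1 = m"
      unfolding m_def using e div_add_self2[of "k+1" "Suc j - k"] by simp
    have mle: "m \<le> Suc (Suc j)" unfolding m_def by simp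
    have IH: "\<bar>cf k c (Suc j - k)\<bar> \<le> c ^ (m-1) / fact (m-1)"
      using "3.IH"[OF True k c] m1 by (metis add_diff_cancel_right')
    have "\<bar>cf k c (Suc (Suc j))\<bar> = c * \<bar>cf k c (Suc j - k)\<bar> / (real (Suc (Suc j)) * real (Suc j))"
      using True c by (simp add: abs_mult)
    also have "\<dots> \<le> c * (c ^ (m-1) / fact (m-1)) / (real (Suc (Suc j)) * real (Suc j))"
      using IH c by (intro divide_right_mono mult_left_mono) auto
    also have "\<dots> \<le> c ^ m / fact m"
    proof -
      have m0: "m \<ge> 1" using m1 by simp
      have f: "fact m = real m * fact (m-1)" using m0 by (metis Suc_diff_1 fact_Suc less_le_trans of_nat_Suc zero_less_one less_eq_Suc_le)
      have cm: "c * c ^ (m-1) = c ^ m" using m0 by (metis Suc_diff_1 power_Suc less_le_trans zero_less_one less_eq_Suc_le)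
      have le: "real m \<le> real (Suc (Suc j)) * real (Suc j)"
      proof -
        have "real m \<le> real (Suc (Suc j))" using mle by simp
        also have "\<dots> \<le> real (Suc (Suc j)) * real (Suc j)" by simp
        finally show ?thesis .
      qed
      have pos: "0 < real m" using m0 by simp
      have "c * (c ^ (m-1) / fact (m-1)) / (real (Suc (Suc j)) * real (Suc j))
            = c ^ m / (fact (m-1) * (real (Suc (Suc j)) * real (Suc j)))" using cm by (simp add: field_simps)
      also have "\<dots> \<le> c ^ m / (fact (m-1) * real m)"
        using le pos c by (intro divide_left_mono mult_left_mono mult_pos_pos) auto
      also have "\<dots> = c ^ m / fact m" using f by (simp add: mult.commute)
      finally show ?thesis .
    qed
    finally show ?thesis unfolding m_def .
  qed
qed

lemma cf_summable:
  assumes k: "1 \<le> k" and c: "0 \<le> c"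
  shows "summable (\<lambda>j. cf k c j * y ^ j)"
proof -
  define d where "d = k + 1"
  define Y where "Y = max 1 \<bar>y\<bar>"
  define Z where "Z = c * Y ^ d * 2 ^ d"
  define K where "K = Y ^ d * exp Z * 2 ^ d"
  have Y1: "1 \<le> Y" unfolding Y_def by simp
  have Z0: "0 \<le> Z" unfolding Z_def using c Y1 by simp
  have d0: "0 < d" unfolding d_def by simp
  have bnd: "norm (cf k c j * y ^ j) \<le> K * (1/2) ^ j" for j
  proof -
    define m where "m = j div d"
    have jm: "j \<le> d * (m + 1)" unfolding m_def using d0
      by (metis add.commute dividend_less_div_times less_imp_le_nat mult.commute mult_Suc_right plus_1_eq_Suc)
    have "norm (cf k c j * y ^ j) = \<bar>cf k c j\<bar> * \<bar>y\<bar> ^ j" by (simp add: abs_mult power_abs)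
    also have "\<dots> \<le> (c ^ m / fact m) * Y ^ (d * (m+1))"
    proof (rule mult_mono)
      show "\<bar>cf k c j\<bar> \<le> c ^ m / fact m" using cf_bound[OF k c, of j] unfolding m_def d_def .
      have "\<bar>y\<bar> ^ j \<le> Y ^ j" unfolding Y_def by (intro power_mono) auto
      also have "\<dots> \<le> Y ^ (d * (m+1))" using Y1 jm by (intro power_increasing) auto
      finally show "\<bar>y\<bar> ^ j \<le> Y ^ (d * (m+1))" .
    qed (use c in auto)
    also have "\<dots> = Y ^ d * ((c * Y ^ d * 2 ^ d) ^ m / fact m) * ((1/2) ^ d) ^ m"
      by (simp add: power_add power_mult power_mult_distrib field_simps mult.commute)
    also have "\<dots> \<le> Y ^ d * exp Z * ((1/2) ^ d) ^ m"
      using pow_fact_le_exp[OF Z0, of m] Y1 unfolding Z_def by (intro mult_right_mono mult_left_mono) auto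
    also have "((1/2::real) ^ d) ^ m = 2 ^ d * (1/2) ^ (d * (m+1))"
      by (simp add: power_add power_mult field_simps)
    also have "(1/2::real) ^ (d * (m+1)) \<le> (1/2) ^ j"
      using jm by (intro power_decreasing) auto
    then have "Y ^ d * exp Z * (2 ^ d * (1/2::real) ^ (d * (m+1))) \<le> Y ^ d * exp Z * (2 ^ d * (1/2) ^ j)"
      using Y1 by (intro mult_left_mono) auto
    finally show ?thesis unfolding K_def by (simp add: mult.assoc)
  qed
  show ?thesis
  proof (rule summable_comparison_test')
    show "summable (\<lambda>j. K * (1/2::real) ^ j)" by (intro summable_mult summable_geometric) auto
    show "\<And>n. 0 \<le> n \<Longrightarrow> norm (cf k c n * y ^ n) \<le> K * (1/2) ^ n" using bnd by blast
  qed
qed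

definition vv :: "nat \<Rightarrow> real \<Rightarrow> real \<Rightarrow> real" where
  "vv k c x = (\<Sum>j. cf k c j * x ^ j)"
definition vv1 :: "nat \<Rightarrow> real \<Rightarrow> real \<Rightarrow> real" where
  "vv1 k c x = (\<Sum>j. diffs (cf k c) j * x ^ j)"
definition vv2 :: "nat \<Rightarrow> real \<Rightarrow> real \<Rightarrow> real" where
  "vv2 k c x = (\<Sum>j. diffs (diffs (cf k c)) j * x ^ j)"

context
  fixes k :: nat and c :: real
  assumes k: "1 \<le> k" and c: "0 \<le> c"
begin

lemma vv_deriv: "(vv k c has_real_derivative vv1 k c x) (at x)"
  unfolding vv_def[abs_def] vv1_def
  by (rule termdiffs_strong_converges_everywhere) (rule cf_summable[OF k c])

lemma vv1_deriv: "(vv1 k c has_real_derivative vv2 k c x) (at x)"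
  unfolding vv1_def[abs_def] vv2_def
  by (rule termdiffs_strong_converges_everywhere) (rule termdiff_converges_all, rule cf_summable[OF k c])

lemma vv_0: "vv k c 0 = -1"
  unfolding vv_def using powser_zero[of "cf k c"] by simp

lemma vv1_0: "vv1 k c 0 = 1"
  unfolding vv1_def using powser_zero[of "diffs (cf k c)"] by (simp add: diffs_def)

lemma vv2_eq: "vv2 k c x = c * x ^ (k - 1) * vv k c x"
proof -
  define h where "h j = diffs (diffs (cf k c)) j * x ^ j" for j
  have hs: "(\<lambda>i. h (i + (k-1))) = (\<lambda>i. c * x ^ (k - 1) * (cf k c i * x ^ i))"
  proof
    fix i
    have kk: "k \<le> Suc (i + (k - 1))" "Suc (i + (k - 1)) - k = i" using k by auto
    have "h (i + (k-1)) = real (Suc (i + (k-1))) * (real (Suc (Suc (i + (k-1)))) * cf k c (Suc (Suc (i + (k-1))))) * x ^ (i + (k-1))"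
      unfolding h_def diffs_def by simp
    also have "\<dots> = c * cf k c i * x ^ (i + (k-1))"
      using kk by (simp del: of_nat_Suc add: field_simps)
    also have "\<dots> = c * x ^ (k - 1) * (cf k c i * x ^ i)" by (simp add: power_add)
    finally show "h (i + (k-1)) = c * x ^ (k - 1) * (cf k c i * x ^ i)" .
  qed
  have h0: "(\<Sum>i<k-1. h i) = 0"
  proof (rule sum.neutral, rule ballI)
    fix i assume "i \<in> {..<k-1}"
    then have "\<not> k \<le> Suc i" by auto
    then show "h i = 0" unfolding h_def diffs_def by simp
  qed
  have "(\<lambda>i. c * x ^ (k - 1) * (cf k c i * x ^ i)) sums (c * x ^ (k - 1) * vv k c x)"
    unfolding vv_def by (intro sums_mult summable_sums cf_summable[OF k c])
  then have "h sums (c * x ^ (k - 1) * vv k c x)"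
    using sums_iff_shift[of h "k-1"] hs h0 by simp
  then show ?thesis unfolding vv2_def h_def[symmetric] by (simp add: sums_iff)
qed

end


lemma ode_unique0:
  fixes d e q :: "real \<Rightarrow> real"
  assumes dd: "\<And>y. (d has_real_derivative e y) (at y)"
      and de: "\<And>y. (e has_real_derivative (2 * e y - q y * d y)) (at y)"
      and d0: "d 0 = 0" and e0: "e 0 = 0"
      and qb: "\<And>y. \<bar>y\<bar> \<le> \<bar>zz\<bar> \<Longrightarrow> \<bar>q y\<bar> \<le> Q"
  shows "d zz = 0"
proof -
  define Q' where "Q' = max Q 0"
  define K where "K = 5 + Q'"
  define E where "E y = (d y)^2 + (e y)^2" for y
  define E' where "E' y = 2 * d y * e y + 2 * e y * (2 * e y - q y * d y)" for y
  have Q'0: "0 \<le> Q'" unfolding Q'_def by simp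
  have dE: "(E has_real_derivative E' y) (at y)" for y
    unfolding E_def[abs_def] E'_def
    by (auto intro!: derivative_eq_intros dd de simp: algebra_simps)
  have E0: "E 0 = 0" unfolding E_def using d0 e0 by simp
  have Enn: "0 \<le> E y" for y unfolding E_def by simp
  have Ebd: "\<bar>E' y\<bar> \<le> K * E y" if y: "\<bar>y\<bar> \<le> \<bar>zz\<bar>" for y
  proof -
    have qy: "\<bar>q y\<bar> \<le> Q'" using qb[OF y] unfolding Q'_def by simp
    have a1: "\<bar>2 * d y * e y\<bar> \<le> E y"
    proof -
      have "\<bar>2 * d y * e y\<bar> = 2 * \<bar>d y\<bar> * \<bar>e y\<bar>" by (simp add: abs_mult)
      also have "\<dots> \<le> \<bar>d y\<bar>^2 + \<bar>e y\<bar>^2" by (rule sum_squares_bound)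
      finally show ?thesis unfolding E_def by simp
    qed
    have a2: "\<bar>2 * e y * (q y * d y)\<bar> \<le> Q' * E y"
    proof -
      have "\<bar>2 * e y * (q y * d y)\<bar> = \<bar>q y\<bar> * \<bar>2 * d y * e y\<bar>" by (simp add: abs_mult)
      also have "\<dots> \<le> Q' * E y" using qy a1 Q'0 by (intro mult_mono) auto
      finally show ?thesis .
    qed
    have a3: "\<bar>4 * (e y)^2\<bar> \<le> 4 * E y" unfolding E_def by simp
    have "E' y = 2 * d y * e y + 4 * (e y)^2 - 2 * e y * (q y * d y)"
      unfolding E'_def by (simp add: algebra_simps power2_eq_square)
    then have "\<bar>E' y\<bar> \<le> E y + 4 * E y + Q' * E y" using a1 a2 a3 by linarith
    then show ?thesis unfolding K_def by (simp add: algebra_simps)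
  qed
  show ?thesis
  proof (cases "0 \<le> zz")
    case True
    define F where "F y = E y * exp (- K * y)" for y
    have "F zz \<le> F 0"
    proof (rule DERIV_nonpos_imp_nonincreasing[OF True])
      fix y assume y: "0 \<le> y" "y \<le> zz"
      have "(F has_real_derivative (E' y * exp (- K * y) + E y * (exp (- K * y) * (- K)))) (at y)"
        unfolding F_def[abs_def] by (auto intro!: derivative_eq_intros dE)
      moreover have "E' y * exp (- K * y) + E y * (exp (- K * y) * (- K)) \<le> 0"
      proof -
        have "E' y \<le> K * E y" using Ebd[of y] y by auto
        then have "(E' y - K * E y) * exp (- K * y) \<le> 0" by (simp add: mult_nonpos_nonneg)
        then show ?thesis by (simp add: algebra_simps)
      qed
      ultimately show "\<exists>z. (F has_real_derivative z) (at y) \<and> z \<le> 0" by blast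
    qed
    then have "E zz \<le> 0" unfolding F_def using E0 by (simp add: mult_le_0_iff)
    then have "(d zz)^2 \<le> 0" unfolding E_def using zero_le_power2[of "e zz"] by linarith
    then show ?thesis by simp
  next
    case False
    then have zz: "zz \<le> 0" by simp
    define F where "F y = E y * exp (K * y)" for y
    have "F zz \<le> F 0"
    proof (rule DERIV_nonneg_imp_nondecreasing[OF zz])
      fix y assume y: "zz \<le> y" "y \<le> 0"
      have "(F has_real_derivative (E' y * exp (K * y) + E y * (exp (K * y) * K))) (at y)"
        unfolding F_def[abs_def] by (auto intro!: derivative_eq_intros dE)
      moreover have "E' y * exp (K * y) + E y * (exp (K * y) * K) \<ge> 0"
      proof -
        have "- K * E y \<le> E' y" using Ebd[of y] y by auto
        then have "(E' y + K * E y) * exp (K * y) \<ge> 0" by simp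
        then show ?thesis by (simp add: algebra_simps)
      qed
      ultimately show "\<exists>z. (F has_real_derivative z) (at y) \<and> z \<ge> 0" by blast
    qed
    then have "E zz \<le> 0" unfolding F_def using E0 by (simp add: mult_le_0_iff)
    then have "(d zz)^2 \<le> 0" unfolding E_def using zero_le_power2[of "e zz"] by linarith
    then show ?thesis by simp
  qed
qed


lemma zero_loc:
  fixes v va vb :: "real \<Rightarrow> real" and G \<delta> :: real
  assumes d1: "\<And>x. (v has_real_derivative va x) (at x)"
      and d2: "\<And>x. (va has_real_derivative vb x) (at x)"
      and v0: "v 0 = -1" and va0: "va 0 = 1"
      and bd: "\<And>x. 0 \<le> x \<Longrightarrow> x \<le> 1 + \<delta> \<Longrightarrow> \<bar>vb x\<bar> \<le> G * \<bar>v x\<bar>"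
      and dpos: "0 < \<delta>" and dle: "\<delta> \<le> 1/2" and G0: "0 \<le> G" and Gd: "8 * G < \<delta>"
  shows "\<bar>Inf {x. 0 < x \<and> v x = 0} - 1\<bar> \<le> \<delta>"
proof -
  define X where "X = 1 + \<delta>"
  have X1: "1 \<le> X" "X \<le> 3/2" using dpos dle unfolding X_def by auto
  have contv: "continuous_on A v" for A
    using d1 by (intro continuous_at_imp_continuous_on) (auto intro: DERIV_isCont)
  have "\<exists>xm\<in>{0..X}. \<forall>y\<in>{0..X}. \<bar>v y\<bar> \<le> \<bar>v xm\<bar>"
    using X1 by (intro continuous_attains_sup continuous_on_rabs contv) auto
  then obtain xm where xm: "xm \<in> {0..X}" and xmax: "\<And>y. y \<in> {0..X} \<Longrightarrow> \<bar>v y\<bar> \<le> \<bar>v xm\<bar>" by blast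
  define M where "M = \<bar>v xm\<bar>"
  have M0: "0 \<le> M" unfolding M_def by simp
  have vbb: "\<bar>vb y\<bar> \<le> G * M" if "0 \<le> y" "y \<le> X" for y
  proof -
    have "\<bar>vb y\<bar> \<le> G * \<bar>v y\<bar>" using bd that unfolding X_def by auto
    also have "\<dots> \<le> G * M" unfolding M_def using xmax that G0 by (intro mult_left_mono) auto
    finally show ?thesis .
  qed
  have r1: "\<bar>va x - 1\<bar> \<le> G * M * X" if x: "0 \<le> x" "x \<le> X" for x
  proof (cases "x = 0")
    case True
    then show ?thesis using va0 G0 M0 X1 by simp
  next
    case False
    then have xp: "0 < x" using x by simp
    obtain z where z: "0 < z" "z < x" "va x - va 0 = (x - 0) * vb z"
      using MVT2[OF xp, of va vb] d2 by blast
    have "\<bar>va x - 1\<bar> = x * \<bar>vb z\<bar>" using z va0 xp by (simp add: abs_mult)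
    also have "\<dots> \<le> X * (G * M)" using vbb[of z] z x xp by (intro mult_mono) auto
    finally show ?thesis by (simp add: mult.commute)
  qed
  have r: "\<bar>v x - (x - 1)\<bar> \<le> G * M * X * X" if x: "0 \<le> x" "x \<le> X" for x
  proof (cases "x = 0")
    case True
    then show ?thesis using v0 G0 M0 X1 by simp
  next
    case False
    then have xp: "0 < x" using x by simp
    have dr: "((\<lambda>y. v y - (y - 1)) has_real_derivative (va y - 1)) (at y)" for y
      by (auto intro!: derivative_eq_intros d1)
    obtain z where z: "0 < z" "z < x" "(v x - (x - 1)) - (v 0 - (0 - 1)) = (x - 0) * (va z - 1)"
      using MVT2[OF xp, of "\<lambda>y. v y - (y - 1)" "\<lambda>y. va y - 1"] dr by blast
    have "\<bar>v x - (x - 1)\<bar> = x * \<bar>va z - 1\<bar>" using z v0 xp by (simp add: abs_mult)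
    also have "\<dots> \<le> X * (G * M * X)" using r1[of z] z x xp G0 M0 by (intro mult_mono) auto
    finally show ?thesis by (simp add: mult.commute mult.left_commute)
  qed
  have XX: "X * X \<le> 9/4"
  proof -
    have "X * X \<le> (3/2) * (3/2)" using X1 by (intro mult_mono) auto
    then show ?thesis by simp
  qed
  have GMX: "G * M * X * X \<le> 9/4 * (G * M)"
    using XX G0 M0 by (metis mult.commute mult.left_commute mult_right_mono zero_le_mult_iff)
  have Mb: "M \<le> 2"
  proof -
    have t1: "\<bar>v xm - (xm - 1)\<bar> \<le> G * M * X * X" using r[of xm] xm by auto
    have "\<bar>v xm\<bar> \<le> \<bar>xm - 1\<bar> + \<bar>v xm - (xm - 1)\<bar>" by arith
    then have "M \<le> \<bar>xm - 1\<bar> + G * M * X * X" using t1 by (simp add: M_def)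
    moreover have "\<bar>xm - 1\<bar> \<le> 1" using xm X1 by auto
    moreover have "G * M \<le> M / 8"
    proof -
      have "G \<le> 1/8" using Gd dle by linarith
      then have "G * M \<le> (1/8) * M" using M0 by (rule mult_right_mono)
      then show ?thesis by simp
    qed
    ultimately show ?thesis using GMX by linarith
  qed
  have rb: "\<bar>v x - (x - 1)\<bar> < \<delta>" if "0 \<le> x" "x \<le> X" for x
  proof -
    have "G * M \<le> G * 2" using Mb G0 by (intro mult_left_mono) auto
    then show ?thesis using r[OF that] GMX Gd G0 by linarith
  qed
  define T where "T = {x. 0 < x \<and> v x = 0}"
  have vX: "v X > 0" using rb[of X] X1 unfolding X_def by auto
  obtain z where z: "0 \<le> z" "z \<le> X" "v z = 0"
    using IVT'[of v 0 0 X] v0 vX X1 contv by auto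
  have zT: "z \<in> T" using z v0 unfolding T_def by (cases "z = 0") auto
  have bdd: "bdd_below T" unfolding T_def by (rule bdd_belowI[of _ 0]) auto
  have up: "Inf T \<le> 1 + \<delta>" using cInf_lower[OF zT bdd] z unfolding X_def by simp
  have low: "1 - \<delta> \<le> Inf T"
  proof (rule cInf_greatest)
    show "T \<noteq> {}" using zT by blast
    fix x assume "x \<in> T"
    then have x: "0 < x" "v x = 0" unfolding T_def by auto
    show "1 - \<delta> \<le> x"
    proof (cases "x \<le> X")
      case True
      then show ?thesis using rb[of x] x by auto
    next
      case False
      then show ?thesis unfolding X_def using dpos by simp
    qed
  qed
  show ?thesis using up low unfolding T_def by auto
qed


lemma is_u_vv:
  assumes k: "1 \<le> tsize t"
  shows "is_u t (\<lambda>x. exp x * vv (tsize t) (wt t * real (tsize t)) x)"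
proof -
  define c where "c = wt t * real (tsize t)"
  have c0: "0 \<le> c" unfolding c_def wt_def by simp
  define v where "v = vv (tsize t) c"
  define v1 where "v1 = vv1 (tsize t) c"
  define v2 where "v2 = vv2 (tsize t) c"
  have d1: "(v has_real_derivative v1 x) (at x)" for x unfolding v_def v1_def by (rule vv_deriv[OF k c0])
  have d2: "(v1 has_real_derivative v2 x) (at x)" for x unfolding v2_def v1_def by (rule vv1_deriv[OF k c0])
  have e2: "v2 x = c * x ^ (tsize t - 1) * v x" for x unfolding v2_def v_def by (rule vv2_eq[OF k c0])
  show ?thesis
    unfolding is_u_def
  proof (intro exI[of _ "\<lambda>x. exp x * (v x + v1 x)"] conjI allI)
    fix x
    show "((\<lambda>x. exp x * vv (tsize t) (wt t * real (tsize t)) x) has_real_derivative exp x * (v x + v1 x)) (at x)"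
      unfolding c_def[symmetric] v_def[symmetric]
      by (auto intro!: derivative_eq_intros d1 simp: algebra_simps)
    have "((\<lambda>x. exp x * (v x + v1 x)) has_real_derivative exp x * (v x + v1 x) + exp x * (v1 x + v2 x)) (at x)"
      by (auto intro!: derivative_eq_intros d1 d2 simp: algebra_simps)
    moreover have "exp x * (v x + v1 x) + exp x * (v1 x + v2 x) =
       2 * (exp x * (v x + v1 x)) - (1 - wt t * real (tsize t) * x ^ (tsize t - 1)) * (exp x * vv (tsize t) (wt t * real (tsize t)) x)"
      unfolding c_def[symmetric] v_def[symmetric] e2 by (simp add: algebra_simps)
    ultimately show "((\<lambda>x. exp x * (v x + v1 x)) has_real_derivative
       2 * (exp x * (v x + v1 x)) - (1 - wt t * real (tsize t) * x ^ (tsize t - 1)) * (exp x * vv (tsize t) (wt t * real (tsize t)) x)) (at x)"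
      by simp
  next
    show "exp 0 * vv (tsize t) (wt t * real (tsize t)) 0 = -1" using vv_0[OF k c0] by (simp add: c_def)
    show "exp 0 * (v 0 + v1 0) = 0" using vv_0[OF k c0] vv1_0[OF k c0] by (simp add: v_def v1_def)
  qed
qed

lemma is_u_unique:
  assumes "is_u t u1" "is_u t u2"
  shows "u1 = u2"
proof
  fix x0
  obtain w1 where w1: "\<And>x. (u1 has_real_derivative w1 x) (at x)"
    "\<And>x. (w1 has_real_derivative (2 * w1 x - (1 - wt t * real (tsize t) * x ^ (tsize t - 1)) * u1 x)) (at x)"
    "u1 0 = -1" "w1 0 = 0" using assms(1) unfolding is_u_def by blast
  obtain w2 where w2: "\<And>x. (u2 has_real_derivative w2 x) (at x)"
    "\<And>x. (w2 has_real_derivative (2 * w2 x - (1 - wt t * real (tsize t) * x ^ (tsize t - 1)) * u2 x)) (at x)"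
    "u2 0 = -1" "w2 0 = 0" using assms(2) unfolding is_u_def by blast
  define q where "q x = 1 - wt t * real (tsize t) * x ^ (tsize t - 1)" for x
  have "(\<lambda>x. u1 x - u2 x) x0 = 0"
  proof (rule ode_unique0[where d = "\<lambda>x. u1 x - u2 x" and zz = x0 and e = "\<lambda>x. w1 x - w2 x" and q = q and Q = "1 + \<bar>wt t * real (tsize t)\<bar> * \<bar>x0\<bar> ^ (tsize t - 1)"])
    show "((\<lambda>x. u1 x - u2 x) has_real_derivative w1 y - w2 y) (at y)" for y
      by (intro derivative_intros w1 w2)
    show "((\<lambda>x. w1 x - w2 x) has_real_derivative 2 * (w1 y - w2 y) - q y * (u1 y - u2 y)) (at y)" for y
    proof -
      have "((\<lambda>x. w1 x - w2 x) has_real_derivative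
        (2 * w1 y - q y * u1 y) - (2 * w2 y - q y * u2 y)) (at y)"
        unfolding q_def by (intro derivative_intros w1 w2)
      then show ?thesis by (simp add: algebra_simps)
    qed
    show "u1 0 - u2 0 = 0" "w1 0 - w2 0 = 0" using w1 w2 by simp_all
    fix y :: real assume y: "\<bar>y\<bar> \<le> \<bar>x0\<bar>"
    have "\<bar>q y\<bar> \<le> 1 + \<bar>wt t * real (tsize t) * y ^ (tsize t - 1)\<bar>" unfolding q_def by arith
    also have "\<dots> \<le> 1 + \<bar>wt t * real (tsize t)\<bar> * \<bar>x0\<bar> ^ (tsize t - 1)"
      using y by (simp add: abs_mult power_abs mult_left_mono power_mono)
    finally show "\<bar>q y\<bar> \<le> 1 + \<bar>wt t * real (tsize t)\<bar> * \<bar>x0\<bar> ^ (tsize t - 1)" .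
  qed
  then show "u1 x0 = u2 x0" by simp
qed

lemma u_fun_eq:
  assumes k: "1 \<le> tsize t"
  shows "u_fun t = (\<lambda>x. exp x * vv (tsize t) (wt t * real (tsize t)) x)"
  unfolding u_fun_def using is_u_vv[OF k] is_u_unique by (intro the_equality) auto

lemma eps_bound:
  assumes k: "1 \<le> tsize t" and dpos: "0 < \<delta>" and dle: "\<delta> \<le> 1/2"
      and dk: "\<delta> * real (tsize t) \<le> 1" and wd: "24 * (wt t * real (tsize t)) < \<delta>"
  shows "\<bar>eps t\<bar> \<le> \<delta>"
proof -
  define c where "c = wt t * real (tsize t)"
  have c0: "0 \<le> c" unfolding c_def wt_def by simp
  define G where "G = c * (1 + \<delta>) ^ (tsize t - 1)"
  have pw: "(1 + \<delta>) ^ (tsize t - 1) \<le> 3"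
  proof -
    have "(1 + \<delta>) ^ (tsize t - 1) \<le> exp \<delta> ^ (tsize t - 1)"
      using dpos by (intro power_mono) (auto simp: exp_ge_add_one_self add.commute)
    also have "\<dots> = exp (real (tsize t - 1) * \<delta>)" by (simp add: exp_of_nat_mult)
    also have "\<dots> \<le> exp 1"
    proof -
      have "real (tsize t - 1) * \<delta> \<le> real (tsize t) * \<delta>" using dpos k by (intro mult_right_mono) auto
      then show ?thesis using dk by (simp add: mult.commute)
    qed
    also have "\<dots> \<le> 3" by (rule exp_le)
    finally show ?thesis .
  qed
  have G0: "0 \<le> G" unfolding G_def using c0 dpos by simp
  have Gd: "8 * G < \<delta>"
  proof -
    have "G \<le> c * 3" unfolding G_def using pw c0 by (rule mult_left_mono)
    then show ?thesis using wd unfolding c_def by linarith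
  qed
  have zs: "{x. 0 < x \<and> u_fun t x = 0} = {x. 0 < x \<and> vv (tsize t) c x = 0}"
    unfolding u_fun_eq[OF k] c_def by simp
  have "\<bar>Inf {x. 0 < x \<and> vv (tsize t) c x = 0} - 1\<bar> \<le> \<delta>"
  proof (rule zero_loc[where va = "vv1 (tsize t) c" and vb = "vv2 (tsize t) c" and G = G])
    show "(vv (tsize t) c has_real_derivative vv1 (tsize t) c x) (at x)" for x by (rule vv_deriv[OF k c0])
    show "(vv1 (tsize t) c has_real_derivative vv2 (tsize t) c x) (at x)" for x by (rule vv1_deriv[OF k c0])
    show "vv (tsize t) c 0 = -1" by (rule vv_0[OF k c0])
    show "vv1 (tsize t) c 0 = 1" by (rule vv1_0[OF k c0])
    fix x :: real assume x: "0 \<le> x" "x \<le> 1 + \<delta>"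
    have "\<bar>vv2 (tsize t) c x\<bar> = c * x ^ (tsize t - 1) * \<bar>vv (tsize t) c x\<bar>"
      unfolding vv2_eq[OF k c0] using c0 x by (simp add: abs_mult)
    also have "\<dots> \<le> G * \<bar>vv (tsize t) c x\<bar>"
      unfolding G_def using x c0 by (intro mult_right_mono mult_left_mono power_mono) auto
    finally show "\<bar>vv2 (tsize t) c x\<bar> \<le> G * \<bar>vv (tsize t) c x\<bar>" .
  qed (use dpos dle G0 Gd in auto)
  then show ?thesis unfolding eps_def rho_tilde_def zs .
qed



definition dl :: "nat \<Rightarrow> real" where
  "dl k = 32 * (real k * (5/4*(real k+1)*(5/12)^k) + (1/3)^k)"

lemma dl_pos: "0 < dl k" unfolding dl_def by (simp add: add_nonneg_pos)

lemma dl_lim: "((\<lambda>k. dl k) \<longlongrightarrow> 0) sequentially"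
  unfolding dl_def by real_asymp

lemma dlk_lim: "((\<lambda>k. dl k * real k) \<longlongrightarrow> 0) sequentially"
  unfolding dl_def by real_asymp

lemma dl2_lim: "((\<lambda>k. 4 ^ k * (dl k)^2) \<longlongrightarrow> 0) sequentially"
proof -
  have e: "2 ^ k * dl k = 32 * (real k * (5/4*(real k+1)*(5/6)^k) + (2/3)^k)" for k
  proof -
    have a: "(2::real) ^ k * (5/12) ^ k = (5/6)^k" by (simp add: power_mult_distrib[symmetric])
    have b: "(2::real) ^ k * (1/3) ^ k = (2/3)^k" by (simp add: power_mult_distrib[symmetric])
    have "2 ^ k * dl k = 32 * (real k * (5/4*(real k+1)*((2::real) ^ k * (5/12) ^ k)) + (2::real) ^ k * (1/3) ^ k)"
      unfolding dl_def by (simp add: algebra_simps)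
    then show ?thesis unfolding a b .
  qed
  have "((\<lambda>k. 32 * (real k * (5/4*(real k+1)*(5/6)^k) + (2/3::real)^k)) \<longlongrightarrow> 0) sequentially"
    by real_asymp
  then have "((\<lambda>k. 2 ^ k * dl k) \<longlongrightarrow> 0) sequentially" unfolding e .
  then have "((\<lambda>k. (2 ^ k * dl k)^2) \<longlongrightarrow> 0^2) sequentially" by (intro tendsto_power)
  moreover have "(2 ^ k * dl k)^2 = 4 ^ k * (dl k)^2" for k
    by (simp add: power_mult_distrib power_mult[symmetric] mult.commute[of k 2]) (simp add: power_mult)
  ultimately show ?thesis by simp
qed

lemma eps_small:
  assumes k: "1 \<le> tsize t" and d1: "dl (tsize t) \<le> 1/2" and d2: "dl (tsize t) * real (tsize t) \<le> 1"
  shows "\<bar>eps t\<bar> \<le> dl (tsize t)"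
proof (rule eps_bound[OF k dl_pos d1 d2])
  define K where "K = tsize t"
  have Bw: "Bw K = 5/4*(real K+1)*(5/12)^K" using k unfolding Bw_def K_def by simp
  have "wt t * real K \<le> Bw K * real K" using wt_bound[of t] unfolding K_def by (intro mult_right_mono) auto
  then have "24 * (wt t * real K) \<le> 24 * (real K * (5/4*(real K+1)*(5/12)^K))" unfolding Bw by (simp add: mult.commute)
  also have "\<dots> < dl K" unfolding dl_def by (simp add: add_nonneg_pos)
  finally show "24 * (wt t * real (tsize t)) < dl (tsize t)" unfolding K_def .
qed


theorem lemma3p10:
  fixes t :: "nat \<Rightarrow> ptree"
  assumes "\<forall>\<^sub>F n in sequentially. log 4 (real n) \<le> real (tsize (t n))"
  shows "(\<lambda>n. (1 + eps (t n)) powr (- real n)) \<sim>[sequentially] (\<lambda>n. exp (- real n * eps (t n)))"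
proof -
  define k where "k n = tsize (t n)" for n
  define e where "e n = eps (t n)" for n
  have ev: "\<forall>\<^sub>F n in sequentially. log 4 (real n) \<le> real (k n)" using assms unfolding k_def .
  have loginf: "filterlim (\<lambda>n::nat. log 4 (real n)) at_top sequentially" by real_asymp
  have kinf: "filterlim k at_top sequentially"
    unfolding filterlim_at_top
  proof
    fix Z :: nat
    have "\<forall>\<^sub>F n in sequentially. real Z \<le> log 4 (real n)"
      using loginf unfolding filterlim_at_top by blast
    then show "\<forall>\<^sub>F n in sequentially. Z \<le> k n"
      using ev by eventually_elim simp
  qed
  have P: "\<forall>\<^sub>F m in sequentially. 1 \<le> m \<and> dl m \<le> 1/2 \<and> dl m * real m \<le> 1"
  proof -
    have "\<forall>\<^sub>F m in sequentially. dl m < 1/2" using order_tendstoD(2)[OF dl_lim, of "1/2"] by simp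
    moreover have "\<forall>\<^sub>F m in sequentially. dl m * real m < 1" using order_tendstoD(2)[OF dlk_lim, of 1] by simp
    moreover have "\<forall>\<^sub>F m in sequentially. 1 \<le> m" by (rule eventually_ge_at_top)
    ultimately show ?thesis by eventually_elim auto
  qed
  have P': "\<forall>\<^sub>F n in sequentially. 1 \<le> k n \<and> dl (k n) \<le> 1/2 \<and> dl (k n) * real (k n) \<le> 1"
    using eventually_compose_filterlim[OF P kinf] .
  have E1: "\<forall>\<^sub>F n in sequentially. \<bar>e n\<bar> \<le> dl (k n) \<and> dl (k n) \<le> 1/2"
    using P' by eventually_elim (use eps_small in \<open>auto simp: k_def e_def\<close>)
  have E2: "\<forall>\<^sub>F n in sequentially. real n \<le> 4 ^ k n"
    using ev eventually_ge_at_top[of 1]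
  proof eventually_elim
    case (elim n)
    have "real n = 4 powr (log 4 (real n))" using elim by simp
    also have "\<dots> \<le> 4 powr (real (k n))" using elim by (intro powr_mono) auto
    also have "\<dots> = 4 ^ k n" by (simp add: powr_realpow)
    finally show ?case .
  qed
  have lim1: "((\<lambda>n. real n * (e n)^2) \<longlongrightarrow> 0) sequentially"
  proof (rule tendsto_sandwich[where f = "\<lambda>_. 0" and h = "\<lambda>n. 4 ^ k n * (dl (k n))^2"])
    show "\<forall>\<^sub>F n in sequentially. 0 \<le> real n * (e n)^2" by simp
    show "\<forall>\<^sub>F n in sequentially. real n * (e n)^2 \<le> 4 ^ k n * (dl (k n))^2"
      using E1 E2
    proof eventually_elim
      case (elim n)
      have "(e n)^2 \<le> (dl (k n))^2"
        using elim by (metis abs_ge_zero power2_abs power_mono)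
      then show ?case using elim by (intro mult_mono) auto
    qed
    show "((\<lambda>_. 0::real) \<longlongrightarrow> 0) sequentially" by simp
    show "((\<lambda>n. 4 ^ k n * (dl (k n))^2) \<longlongrightarrow> 0) sequentially"
      using filterlim_compose[OF dl2_lim kinf] by simp
  qed
  have lim2: "((\<lambda>n. real n * (e n - ln (1 + e n))) \<longlongrightarrow> 0) sequentially"
  proof (rule Lim_null_comparison)
    show "\<forall>\<^sub>F n in sequentially. norm (real n * (e n - ln (1 + e n))) \<le> 2 * (real n * (e n)^2)"
      using E1
    proof eventually_elim
      case (elim n)
      have "\<bar>e n\<bar> \<le> 1/2" using elim by linarith
      then have "\<bar>ln (1 + e n) - e n\<bar> \<le> 2 * (e n)^2" by (rule abs_ln_one_plus_x_minus_x_bound)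
      then have "real n * \<bar>e n - ln (1 + e n)\<bar> \<le> real n * (2 * (e n)^2)"
        by (intro mult_left_mono) (auto simp: abs_minus_commute)
      moreover have "norm (real n * (e n - ln (1 + e n))) = real n * \<bar>e n - ln (1 + e n)\<bar>"
        by (simp add: abs_mult)
      moreover have "real n * (2 * (e n)^2) = 2 * (real n * (e n)^2)" by (simp add: ac_simps)
      ultimately show ?case by linarith
    qed
    show "((\<lambda>n. 2 * (real n * (e n)^2)) \<longlongrightarrow> 0) sequentially"
      using tendsto_mult_right_zero[OF lim1, of 2] by simp
  qed
  have lim3: "((\<lambda>n. exp (real n * (e n - ln (1 + e n)))) \<longlongrightarrow> 1) sequentially"
    using tendsto_exp[OF lim2] by simp
  have lim4: "((\<lambda>n. (1 + e n) powr (- real n) / exp (- real n * e n)) \<longlongrightarrow> 1) sequentially"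
  proof (rule Lim_transform_eventually[OF lim3])
    show "\<forall>\<^sub>F n in sequentially. exp (real n * (e n - ln (1 + e n))) = (1 + e n) powr (- real n) / exp (- real n * e n)"
      using E1
    proof eventually_elim
      case (elim n)
      have pos: "0 < 1 + e n" using elim by linarith
      have "(1 + e n) powr (- real n) / exp (- real n * e n) = exp (- real n * ln (1 + e n)) / exp (- real n * e n)"
        using pos by (simp add: powr_def)
      also have "\<dots> = exp (real n * (e n - ln (1 + e n)))" by (simp add: exp_diff[symmetric] algebra_simps)
      finally show ?case by simp
    qed
  qed
  show ?thesis
    by (rule asymp_equivI') (use lim4 in \<open>simp add: e_def\<close>)
qed


end
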